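(* Let $G=(V,E)$ be a $k$-cozy graph and let $U\subseteq V$ have fewer than $k$ spines in total. Then for every color $c\in\{1,\dots,k\}$, the number of spines of $U$ of color $c$ is even.
   Context: An undirected graph $G$ is $k$-cozy if it is connected, $k$-regular, and equipped with a $1$-factorization, i.e., an assignment of colors from $\{1,\dots,k\}$ to its edges such that the $k$ edges incident at each vertex receive distinct colors. For $U\subseteq V$, a spine of $U$ is an edge with exactly one endpoint in $U$. *)

theory Defs
  imports Main
begin

definition simple_graph :: "'a set \<Rightarrow> 'a set set \<Rightarrow> bool" where
  "simple_graph V E \<longleftrightarrow> finite V \<and> (\<forall>e\<in>E. e \<subseteq> V \<and> card e = 2)"

definition incident_edges :: "'a set set \<Rightarrow> 'a \<Rightarrow> 'a set set" where
  "incident_edges E v = {e\<in>E. v \<in> e}"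

definition adj :: "'a set set \<Rightarrow> ('a \<times> 'a) set" where
  "adj E = {(u, v). {u, v} \<in> E}"

definition connected_graph :: "'a set \<Rightarrow> 'a set set \<Rightarrow> bool" where
  "connected_graph V E \<longleftrightarrow> V \<noteq> {} \<and> (\<forall>u\<in>V. \<forall>v\<in>V. (u, v) \<in> (adj E)\<^sup>*)"

definition regular :: "nat \<Rightarrow> 'a set \<Rightarrow> 'a set set \<Rightarrow> bool" where
  "regular k V E \<longleftrightarrow> (\<forall>v\<in>V. card (incident_edges E v) = k)"

definition one_factorization :: "nat \<Rightarrow> 'a set \<Rightarrow> 'a set set \<Rightarrow> ('a set \<Rightarrow> nat) \<Rightarrow> bool" where
  "one_factorization k V E col \<longleftrightarrow>
     (\<forall>e\<in>E. col e \<in> {1..k}) \<and> (\<forall>v\<in>V. inj_on col (incident_edges E v))"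

definition cozy :: "nat \<Rightarrow> 'a set \<Rightarrow> 'a set set \<Rightarrow> ('a set \<Rightarrow> nat) \<Rightarrow> bool" where
  "cozy k V E col \<longleftrightarrow> simple_graph V E \<and> connected_graph V E \<and> regular k V E
     \<and> one_factorization k V E col"

definition spines :: "'a set set \<Rightarrow> 'a set \<Rightarrow> 'a set set" where
  "spines E U = {e\<in>E. card (e \<inter> U) = 1}"

end

theory Submission
  imports Defs
begin

lemma color_parity:
  assumes cz: "cozy k V E col" and UV: "U \<subseteq> V" and c: "c \<in> {1..k}"
  shows "even (card U) \<longleftrightarrow> even (card {e\<in>spines E U. col e = c})"
proof -
  have sg: "simple_graph V E" and reg: "regular k V E" and of: "one_factorization k V E col"
    using cz by (auto simp: cozy_def)
  have fV: "finite V" and Esub: "\<forall>e\<in>E. e \<subseteq> V \<and> card e = 2" using sg by (auto simp: simple_graph_def)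
  have fE: "finite E" using fV Esub by (metis Pow_iff finite_Pow_iff finite_subset subsetI)
  have colr: "\<forall>e\<in>E. col e \<in> {1..k}" and inj: "\<forall>v\<in>V. inj_on col (incident_edges E v)"
    using of by (auto simp: one_factorization_def)
  define Ec where "Ec = {e\<in>E. col e = c}"
  have fEc: "finite Ec" using fE by (simp add: Ec_def)
  have ex: "\<exists>e\<in>Ec. v \<in> e" if v: "v \<in> V" for v
  proof -
    have fI: "finite (incident_edges E v)" using fE by (simp add: incident_edges_def)
    have "col ` incident_edges E v \<subseteq> {1..k}" using colr by (auto simp: incident_edges_def)
    moreover have "card (col ` incident_edges E v) = k"
      using inj v reg by (simp add: card_image regular_def)
    ultimately have "col ` incident_edges E v = {1..k}"
      by (simp add: card_subset_eq)
    then have "c \<in> col ` incident_edges E v" using c by simp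
    then show ?thesis by (auto simp: Ec_def incident_edges_def)
  qed
  have disj: "e1 = e2" if "e1 \<in> Ec" "e2 \<in> Ec" "v \<in> e1" "v \<in> e2" for e1 e2 v
  proof -
    have "v \<in> V" using that Esub by (auto simp: Ec_def)
    then have "inj_on col (incident_edges E v)" using inj by auto
    moreover have "e1 \<in> incident_edges E v" "e2 \<in> incident_edges E v" "col e1 = col e2"
      using that by (auto simp: Ec_def incident_edges_def)
    ultimately show ?thesis by (meson inj_onD)
  qed
  have Ueq: "U = (\<Union>e\<in>Ec. e \<inter> U)" using ex UV by blast
  have "card U = (\<Sum>e\<in>Ec. card (e \<inter> U))"
    apply (subst Ueq)
    apply (rule card_UN_disjoint[OF fEc])
    using fEc Esub fV apply (auto simp: Ec_def intro: finite_subset)[1]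
    using disj by blast
  then have "even (card U) \<longleftrightarrow> even (card {e\<in>Ec. odd (card (e \<inter> U))})"
    using even_sum_iff[OF fEc] by simp
  moreover have "{e\<in>Ec. odd (card (e \<inter> U))} = {e\<in>spines E U. col e = c}"
  proof -
    have "odd (card (e \<inter> U)) \<longleftrightarrow> card (e \<inter> U) = 1" if "e \<in> E" for e
    proof -
      have fe: "finite e" "card e = 2" using that Esub card.infinite by force+
      have "card (e \<inter> U) \<le> 2" using fe card_mono[of e "e \<inter> U"] by auto
      then show ?thesis by presburger
    qed
    then show ?thesis by (auto simp: Ec_def spines_def)
  qed
  ultimately show ?thesis by simp
qed

theorem mainTheorem10:
  fixes V :: "'a set" and E :: "'a set set" and col :: "'a set \<Rightarrow> nat" and k :: nat and U :: "'a set"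
  assumes "cozy k V E col"
    and "U \<subseteq> V"
    and "card (spines E U) < k"
  shows "\<forall>c\<in>{1..k}. even (card {e\<in>spines E U. col e = c})"
proof (rule ccontr)
  assume "\<not> ?thesis"
  then obtain c0 where c0: "c0 \<in> {1..k}" "odd (card {e\<in>spines E U. col e = c0})" by auto
  then have oU: "odd (card U)" using color_parity[OF assms(1,2) c0(1)] by simp
  have allc: "{1..k} \<subseteq> col ` spines E U"
  proof
    fix c assume c: "c \<in> {1..k}"
    then have "odd (card {e\<in>spines E U. col e = c})" using color_parity[OF assms(1,2) c] oU by simp
    then have "{e\<in>spines E U. col e = c} \<noteq> {}" by (metis card.empty even_zero)
    then show "c \<in> col ` spines E U" by auto
  qed
  have "finite (spines E U)"
  proof -
    have "finite V" "\<forall>e\<in>E. e \<subseteq> V" using assms(1) by (auto simp: cozy_def simple_graph_def)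
    then have "finite E" by (metis Pow_iff finite_Pow_iff finite_subset subsetI)
    then show ?thesis by (simp add: spines_def)
  qed
  then have "k \<le> card (spines E U)"
    using card_mono[OF finite_imageI allc] card_image_le[of "spines E U" col] by auto
  then show False using assms(3) by simp
qed

end
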